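(* Let $a,r$ be real numbers with $0<a<a+r<1$ and let $c=b_{\mathbb{D},2}(a,a+r)$. Then \[ \{z:|z-a|<r\}\subset B_{\mathbb{D},2}(a;c)\subset\{z:|z|<a+r\}. \]
   Context: $\mathbb{D}=\{z\in\mathbb{C}:|z|<1\}$. For $z_1,z_2\in\mathbb{D}$, $b_{\mathbb{D},2}(z_1,z_2)=\sup_{z\in\partial\mathbb{D}}\frac{|z_1-z_2|}{\sqrt{|z_1-z|^2+|z-z_2|^2}}$, and $B_{\mathbb{D},2}(a;c)=\{z\in\mathbb{D}: b_{\mathbb{D},2}(a,z)<c\}$. *)

theory Defs
  imports "HOL-Analysis.Analysis"
begin

definition bD2 :: "complex \<Rightarrow> complex \<Rightarrow> real" where
  "bD2 z1 z2 = (SUP z\<in>sphere 0 1. cmod (z1 - z2) / sqrt ((cmod (z1 - z))\<^sup>2 + (cmod (z - z2))\<^sup>2))"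

definition BD2 :: "complex \<Rightarrow> real \<Rightarrow> complex set" where
  "BD2 a c = {z \<in> ball 0 1. bD2 a z < c}"

end

theory Submission
  imports Defs
begin

lemma sumsq_expand:
  fixes z1 z2 w :: complex
  shows "(cmod (z1 - w))\<^sup>2 + (cmod (w - z2))\<^sup>2
     = (cmod z1)\<^sup>2 + (cmod z2)\<^sup>2 + 2 * (cmod w)\<^sup>2 - 2 * Re ((z1 + z2) * cnj w)"
  unfolding cmod_power2 by (simp add: power2_eq_square algebra_simps)

lemma sumsq_lower:
  fixes z1 z2 w :: complex
  assumes "cmod w = 1"
  shows "(cmod z1)\<^sup>2 + (cmod z2)\<^sup>2 + 2 - 2 * cmod (z1 + z2)
     \<le> (cmod (z1 - w))\<^sup>2 + (cmod (w - z2))\<^sup>2"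
proof -
  have "Re ((z1 + z2) * cnj w) \<le> cmod ((z1 + z2) * cnj w)" by (rule complex_Re_le_cmod)
  also have "\<dots> = cmod (z1 + z2)" using assms by (simp add: norm_mult)
  finally show ?thesis using assms by (simp add: sumsq_expand)
qed

lemma unit_cnj_aux:
  fixes s :: complex
  assumes "s \<noteq> 0"
  shows "s * cnj (s / complex_of_real (cmod s)) = complex_of_real (cmod s)"
proof -
  have "s * cnj (s / complex_of_real (cmod s)) = (s * cnj s) / complex_of_real (cmod s)"
    by (simp add: complex_cnj_divide)
  also have "\<dots> = complex_of_real ((cmod s)\<^sup>2) / complex_of_real (cmod s)"
    by (simp only: complex_norm_square)
  also have "\<dots> = complex_of_real (cmod s)"
    using assms by (simp add: power2_eq_square)
  finally show ?thesis .
qed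

lemma sumsq_attained:
  fixes z1 z2 :: complex
  obtains w where "cmod w = 1" and "(cmod (z1 - w))\<^sup>2 + (cmod (w - z2))\<^sup>2
     = (cmod z1)\<^sup>2 + (cmod z2)\<^sup>2 + 2 - 2 * cmod (z1 + z2)"
proof (cases "z1 + z2 = 0")
  case True
  show ?thesis by (rule that[of 1]) (simp_all add: sumsq_expand True)
next
  case False
  define w where "w = (z1 + z2) / complex_of_real (cmod (z1 + z2))"
  have w1: "cmod w = 1" using False by (simp add: w_def norm_divide)
  have "(z1 + z2) * cnj w = complex_of_real (cmod (z1 + z2))"
    unfolding w_def by (rule unit_cnj_aux[OF False])
  hence "Re ((z1 + z2) * cnj w) = cmod (z1 + z2)" by simp
  thus ?thesis using w1 by (intro that[of w]) (simp_all add: sumsq_expand)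
qed

lemma bD2_formula:
  fixes z1 z2 :: complex
  assumes "cmod z1 < 1" "cmod z2 < 1"
  shows "bD2 z1 z2 = cmod (z1 - z2) / sqrt ((cmod z1)\<^sup>2 + (cmod z2)\<^sup>2 + 2 - 2 * cmod (z1 + z2))"
proof -
  define M where "M = (cmod z1)\<^sup>2 + (cmod z2)\<^sup>2 + 2 - 2 * cmod (z1 + z2)"
  have par: "(cmod (z1 + z2))\<^sup>2 + (cmod (z1 - z2))\<^sup>2 = 2 * (cmod z1)\<^sup>2 + 2 * (cmod z2)\<^sup>2"
    unfolding cmod_power2 by (simp add: power2_eq_square algebra_simps)
  have "cmod (z1 + z2) \<le> cmod z1 + cmod z2" by (rule norm_triangle_ineq)
  hence s2: "cmod (z1 + z2) < 2" using assms by simp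
  have Meq: "M = ((2 - cmod (z1 + z2))\<^sup>2 + (cmod (z1 - z2))\<^sup>2) / 2"
    using par unfolding M_def by (simp add: power2_eq_square algebra_simps)
  moreover have "(2 - cmod (z1 + z2))\<^sup>2 > 0" using s2 by simp
  moreover have "(cmod (z1 - z2))\<^sup>2 \<ge> 0" by simp
  ultimately have "(2 - cmod (z1 + z2))\<^sup>2 + (cmod (z1 - z2))\<^sup>2 > 0" by linarith
  hence Mpos: "M > 0" unfolding Meq by simp
  obtain w0 where w0: "cmod w0 = 1" "(cmod (z1 - w0))\<^sup>2 + (cmod (w0 - z2))\<^sup>2 = M"
    using sumsq_attained[of z1 z2] unfolding M_def by blast
  have "bD2 z1 z2 = cmod (z1 - z2) / sqrt M"
    unfolding bD2_def
  proof (rule cSup_eq_maximum)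
    show "cmod (z1 - z2) / sqrt M \<in> (\<lambda>z. cmod (z1 - z2) / sqrt ((cmod (z1 - z))\<^sup>2 + (cmod (z - z2))\<^sup>2)) ` sphere 0 1"
      using w0 by (intro image_eqI[of _ _ w0]) auto
  next
    fix x assume "x \<in> (\<lambda>z. cmod (z1 - z2) / sqrt ((cmod (z1 - z))\<^sup>2 + (cmod (z - z2))\<^sup>2)) ` sphere 0 1"
    then obtain w where w: "cmod w = 1" and x: "x = cmod (z1 - z2) / sqrt ((cmod (z1 - w))\<^sup>2 + (cmod (w - z2))\<^sup>2)"
      by auto
    have "M \<le> (cmod (z1 - w))\<^sup>2 + (cmod (w - z2))\<^sup>2" using sumsq_lower[OF w] unfolding M_def .
    hence "sqrt M \<le> sqrt ((cmod (z1 - w))\<^sup>2 + (cmod (w - z2))\<^sup>2)" by simp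
    thus "x \<le> cmod (z1 - z2) / sqrt M" unfolding x
      using Mpos by (intro divide_left_mono) auto
  qed
  thus ?thesis unfolding M_def .
qed


lemma bD2_formula2:
  fixes z1 z2 :: complex
  assumes "cmod z1 < 1" "cmod z2 < 1"
  shows "bD2 z1 z2 = cmod (z1 - z2) / sqrt (((2 - cmod (z1 + z2))\<^sup>2 + (cmod (z1 - z2))\<^sup>2) / 2)"
proof -
  have par: "(cmod (z1 + z2))\<^sup>2 + (cmod (z1 - z2))\<^sup>2 = 2 * (cmod z1)\<^sup>2 + 2 * (cmod z2)\<^sup>2"
    unfolding cmod_power2 by (simp add: power2_eq_square algebra_simps)
  have "(cmod z1)\<^sup>2 + (cmod z2)\<^sup>2 + 2 - 2 * cmod (z1 + z2) = ((2 - cmod (z1 + z2))\<^sup>2 + (cmod (z1 - z2))\<^sup>2) / 2"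
    using par by (simp add: power2_eq_square algebra_simps)
  thus ?thesis using bD2_formula[OF assms] by simp
qed

lemma sq_ratio:
  fixes D P :: real
  assumes "P > 0"
  shows "(D / sqrt ((P\<^sup>2 + D\<^sup>2) / 2))\<^sup>2 = 2 * D\<^sup>2 / (P\<^sup>2 + D\<^sup>2)"
proof -
  have "P\<^sup>2 + D\<^sup>2 > 0" using assms by (simp add: add_pos_nonneg)
  thus ?thesis by (simp add: power_divide)
qed

lemma cmp_ratio:
  fixes D D' P P' :: real
  assumes "D \<ge> 0" "D' \<ge> 0" "P > 0" "P' > 0"
  shows "D / sqrt ((P\<^sup>2 + D\<^sup>2) / 2) < D' / sqrt ((P'\<^sup>2 + D'\<^sup>2) / 2) \<longleftrightarrow> D * P' < D' * P"
proof -
  have A: "P\<^sup>2 + D\<^sup>2 > 0" using assms by (simp add: add_pos_nonneg)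
  have B: "P'\<^sup>2 + D'\<^sup>2 > 0" using assms by (simp add: add_pos_nonneg)
  have x0: "D / sqrt ((P\<^sup>2 + D\<^sup>2) / 2) \<ge> 0" using assms by simp
  have y0: "D' / sqrt ((P'\<^sup>2 + D'\<^sup>2) / 2) \<ge> 0" using assms by simp
  have "D / sqrt ((P\<^sup>2 + D\<^sup>2) / 2) < D' / sqrt ((P'\<^sup>2 + D'\<^sup>2) / 2) \<longleftrightarrow>
        (D / sqrt ((P\<^sup>2 + D\<^sup>2) / 2))\<^sup>2 < (D' / sqrt ((P'\<^sup>2 + D'\<^sup>2) / 2))\<^sup>2"
    using x0 y0 by (metis abs_of_nonneg power2_less_imp_less power_strict_mono zero_less_numeral)
  also have "\<dots> \<longleftrightarrow> 2 * D\<^sup>2 / (P\<^sup>2 + D\<^sup>2) < 2 * D'\<^sup>2 / (P'\<^sup>2 + D'\<^sup>2)"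
    using assms by (simp add: sq_ratio)
  also have "\<dots> \<longleftrightarrow> 2 * D\<^sup>2 * (P'\<^sup>2 + D'\<^sup>2) < 2 * D'\<^sup>2 * (P\<^sup>2 + D\<^sup>2)"
    using A B by (simp add: divide_less_eq less_divide_eq field_simps)
  also have "\<dots> \<longleftrightarrow> (D * P')\<^sup>2 < (D' * P)\<^sup>2"
    by (simp add: power2_eq_square algebra_simps)
  also have "\<dots> \<longleftrightarrow> D * P' < D' * P"
    using assms by (metis mult_nonneg_nonneg less_imp_le power2_less_imp_less power_strict_mono zero_less_numeral)
  finally show ?thesis .
qed

theorem theorem3p16:
  fixes a r c :: real
  assumes "0 < a" and "a < a + r" and "a + r < 1"
    and "c = bD2 (complex_of_real a) (complex_of_real (a + r))"
  shows "ball (complex_of_real a) r \<subseteq> BD2 (complex_of_real a) c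
       \<and> BD2 (complex_of_real a) c \<subseteq> ball 0 (a + r)"
proof -
  have r0: "r > 0" using assms by simp
  define P' where "P' = 2 - 2 * a - r"
  have P'pos: "P' > 0" using assms unfolding P'_def by simp
  have c_eq: "c = r / sqrt ((P'\<^sup>2 + r\<^sup>2) / 2)"
  proof -
    have "c = cmod (complex_of_real a - complex_of_real (a + r)) /
       sqrt (((2 - cmod (complex_of_real a + complex_of_real (a + r)))\<^sup>2 + (cmod (complex_of_real a - complex_of_real (a + r)))\<^sup>2) / 2)"
    proof -
      have "cmod (complex_of_real (a + r)) < 1" using assms by (simp only: norm_of_real)
      moreover have "cmod (complex_of_real a) < 1" using assms by simp
      ultimately show ?thesis unfolding assms(4) by (rule bD2_formula2[rotated])
    qed
    moreover have "cmod (complex_of_real a - complex_of_real (a + r)) = r"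
      using r0 by (simp flip: of_real_diff)
    moreover have "cmod (complex_of_real a + complex_of_real (a + r)) = 2 * a + r"
      using assms by (simp flip: of_real_add)
    ultimately show ?thesis unfolding P'_def by (simp add: algebra_simps)
  qed
  have key: "bD2 (complex_of_real a) z < c \<longleftrightarrow> cmod (complex_of_real a - z) * P' < r * (2 - cmod (complex_of_real a + z))"
    if z1: "cmod z < 1" for z
  proof -
    have "cmod (complex_of_real a + z) \<le> cmod (complex_of_real a) + cmod z" by (rule norm_triangle_ineq)
    hence P: "2 - cmod (complex_of_real a + z) > 0" using assms z1 by simp
    have a1: "cmod (complex_of_real a) < 1" using assms by simp
    show ?thesis unfolding c_eq bD2_formula2[OF a1 z1]
      using P P'pos r0 by (intro cmp_ratio) auto
  qed
  show ?thesis
  proof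
    show "ball (complex_of_real a) r \<subseteq> BD2 (complex_of_real a) c"
    proof
      fix z assume "z \<in> ball (complex_of_real a) r"
      hence d: "cmod (complex_of_real a - z) < r" by (simp add: dist_norm)
      have "cmod z \<le> cmod (complex_of_real a) + cmod (complex_of_real a - z)"
        by (metis norm_triangle_sub add.commute norm_minus_commute)
      hence z1: "cmod z < 1" using d assms by simp
      have "cmod (complex_of_real a + z) = cmod (2 * complex_of_real a - (complex_of_real a - z))"
        by (simp add: algebra_simps)
      also have "\<dots> \<le> cmod (2 * complex_of_real a) + cmod (complex_of_real a - z)"
        by (rule norm_triangle_ineq4)
      finally have S: "cmod (complex_of_real a + z) < 2 * a + r" using d assms by (simp add: norm_mult)
      have "cmod (complex_of_real a - z) * P' < r * P'" using d P'pos by simp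
      also have "r * P' < r * (2 - cmod (complex_of_real a + z))"
        using S r0 unfolding P'_def by simp
      finally have "bD2 (complex_of_real a) z < c" using key[OF z1] by simp
      thus "z \<in> BD2 (complex_of_real a) c" using z1 unfolding BD2_def by simp
    qed
  next
    show "BD2 (complex_of_real a) c \<subseteq> ball 0 (a + r)"
    proof
      fix z assume "z \<in> BD2 (complex_of_real a) c"
      hence z1: "cmod z < 1" and b: "bD2 (complex_of_real a) z < c" unfolding BD2_def by auto
      define D where "D = cmod (complex_of_real a - z)"
      define S where "S = cmod (complex_of_real a + z)"
      have ineq: "D * P' < r * (2 - S)" using key[OF z1] b unfolding D_def S_def by simp
      show "z \<in> ball 0 (a + r)"
      proof (rule ccontr)
        assume "z \<notin> ball 0 (a + r)"
        hence rho: "cmod z \<ge> a + r" by simp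
        have "cmod z - cmod (complex_of_real a) \<le> cmod (z - complex_of_real a)"
          by (rule norm_triangle_ineq2)
        hence "cmod z - a \<le> D" unfolding D_def using assms(1) by (simp add: norm_minus_commute)
        hence D1: "D \<ge> cmod z - a" by simp
        have "cmod (2 * z) = cmod ((complex_of_real a + z) - (complex_of_real a - z))"
          by (simp add: algebra_simps)
        also have "\<dots> \<le> S + D" unfolding D_def S_def by (rule norm_triangle_ineq4)
        finally have "cmod (2 * z) \<le> D + S" by simp
        hence D2: "D + S \<ge> 2 * cmod z" by (simp add: norm_mult)
        have e1: "D * (2 - 2 * a - 2 * r) \<ge> (cmod z - a) * (2 - 2 * a - 2 * r)"
          using D1 assms by (intro mult_right_mono) auto
        have "D * P' - r * (2 - S) = D * (2 - 2 * a - 2 * r) + r * (D + S) - 2 * r"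
          unfolding P'_def by (simp add: algebra_simps)
        also have "\<dots> \<ge> (cmod z - a) * (2 - 2 * a - 2 * r) + r * (2 * cmod z) - 2 * r"
        proof -
          have "r * (D + S) \<ge> r * (2 * cmod z)" using D2 r0 by (intro mult_left_mono) auto
          thus ?thesis using e1 by linarith
        qed
        finally have "D * P' - r * (2 - S) \<ge> (cmod z - a) * (2 - 2 * a - 2 * r) + r * (2 * cmod z) - 2 * r" .
        moreover have "(cmod z - a) * (2 - 2 * a - 2 * r) + r * (2 * cmod z) - 2 * r
             = (cmod z - (a + r)) * (2 - 2 * a) + 0"
          by (simp add: algebra_simps)
        moreover have "(cmod z - (a + r)) * (2 - 2 * a) \<ge> 0"
          using rho assms by simp
        ultimately show False using ineq by linarith
      qed
    qed
  qed
qed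

end
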